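(* Let $0\le\gamma<1$ and let $f$ be analytic on $\Omega_\gamma$ with $|f(z)|\le1$ for all $z\in\Omega_\gamma$, and $f(z)=\sum_{n=0}^\infty a_nz^n$ for $z\in\mathbb{D}$. Then $$|a_n|\le\frac{1-|a_0|^2}{1+\gamma}\qquad\text{for all } n\ge1.$$
   Context: $\mathbb{D}$ is the open unit disk. For $0\le\gamma<1$, $\Omega_\gamma=\{z\in\mathbb{C}: |z+\frac{\gamma}{1-\gamma}|<\frac{1}{1-\gamma}\}$, a disk containing $\mathbb{D}$. *)

theory Defs
  imports "HOL-Complex_Analysis.Complex_Analysis"
begin

definition Omega :: "real \<Rightarrow> complex set" where
  "Omega \<gamma> = {z. cmod (z + complex_of_real (\<gamma> / (1 - \<gamma>))) < 1 / (1 - \<gamma>)}"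

end

theory Submission
  imports Defs
begin

lemma sums_has_fps:
  fixes c :: "nat \<Rightarrow> complex"
  assumes r: "r > 0" and s: "\<And>z. z \<in> ball 0 r \<Longrightarrow> (\<lambda>n. c n * z^n) sums g z"
  shows "fps_conv_radius (Abs_fps c) \<ge> ereal r" "g has_fps_expansion Abs_fps c"
proof -
  show cr: "fps_conv_radius (Abs_fps c) \<ge> ereal r"
    unfolding fps_conv_radius_def
  proof (rule conv_radius_geI_ex')
    fix r' :: real assume "0 < r'" "ereal r' < ereal r"
    then have "of_real r' \<in> ball (0::complex) r" by auto
    from s[OF this] show "summable (\<lambda>n. fps_nth (Abs_fps c) n * of_real r' ^ n)"
      by (auto simp: sums_iff)
  qed
  have ev: "eventually (\<lambda>z. z \<in> ball 0 r) (nhds (0::complex))"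
    using r by (intro eventually_nhds_in_open) auto
  show "g has_fps_expansion Abs_fps c"
    unfolding has_fps_expansion_def
  proof
    show "0 < fps_conv_radius (Abs_fps c)" using cr r
      by (meson ereal_less(2) less_le_trans)
    show "\<forall>\<^sub>F z in nhds 0. eval_fps (Abs_fps c) z = g z"
      using ev by eventually_elim (use s in \<open>auto simp: eval_fps_def sums_iff\<close>)
  qed
qed

lemma mobius_le:
  fixes a u :: complex
  assumes "cmod a < 1" "cmod u \<le> 1"
  shows "cmod (u - a) \<le> cmod (1 - cnj a * u)"
proof -
  have "complex_of_real ((cmod (1 - cnj a * u))\<^sup>2 - (cmod (u - a))\<^sup>2)
        = (1 - cnj a * u) * cnj (1 - cnj a * u) - (u - a) * cnj (u - a)"
    by (simp only: of_real_diff complex_norm_square)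
  also have "\<dots> = 1 + (a * cnj a) * (u * cnj u) - u * cnj u - a * cnj a"
    by (simp add: algebra_simps)
  also have "\<dots> = complex_of_real ((1 - (cmod a)\<^sup>2) * (1 - (cmod u)\<^sup>2))"
    by (simp add: complex_norm_square[symmetric] algebra_simps)
  finally have "(cmod (1 - cnj a * u))\<^sup>2 - (cmod (u - a))\<^sup>2 = (1 - (cmod a)\<^sup>2) * (1 - (cmod u)\<^sup>2)"
    using of_real_eq_iff by blast
  moreover have "(1 - (cmod a)\<^sup>2) * (1 - (cmod u)\<^sup>2) \<ge> 0"
    using assms by (intro mult_nonneg_nonneg) (auto simp: power_le_one abs_square_le_1)
  ultimately have "(cmod (u - a))\<^sup>2 \<le> (cmod (1 - cnj a * u))\<^sup>2" by linarith
  then show ?thesis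
    by (rule power2_le_imp_le) simp
qed

lemma sums_holo:
  fixes c :: "nat \<Rightarrow> complex"
  assumes r: "r > 0" and s: "\<And>z. z \<in> ball 0 r \<Longrightarrow> (\<lambda>n. c n * z^n) sums g z"
  shows "g holomorphic_on ball 0 r"
proof (rule holomorphic_transform)
  have "ball 0 r \<subseteq> eball 0 (fps_conv_radius (Abs_fps c))"
    using sums_has_fps(1)[OF r s] by (metis eball_ereal eball_mono)
  then show "eval_fps (Abs_fps c) holomorphic_on ball 0 r"
    by (rule holomorphic_on_eval_fps)
  show "eval_fps (Abs_fps c) x = g x" if "x \<in> ball 0 r" for x
    using s[OF that] by (simp add: eval_fps_def sums_iff)
qed

lemma roots_unity_sum:
  fixes k n :: nat
  assumes k: "k \<ge> 1"
  defines "\<omega> \<equiv> exp (2 * of_real pi * \<i> / of_nat k)"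
  shows "(\<Sum>j<k. (\<omega> ^ n) ^ j) = (if k dvd n then of_nat k else 0)"
proof -
  have pw: "\<omega> ^ m = exp (2 * of_real pi * \<i> * of_nat m / of_nat k)" for m
    unfolding \<omega>_def by (simp add: exp_of_nat_mult[symmetric] algebra_simps)
  show ?thesis
  proof (cases "k dvd n")
    case True
    then obtain m where m: "n = k * m" by blast
    have "\<omega> ^ n = exp (of_nat m * (2 * of_real pi * \<i>))"
      using k by (simp add: pw m field_simps)
    also have "\<dots> = 1" by (simp add: exp_of_nat_mult)
    finally show ?thesis using True by simp
  next
    case False
    have ne: "\<omega> ^ n \<noteq> 1"
    proof
      assume "\<omega> ^ n = 1"
      then obtain m :: int where "Im (2 * of_real pi * \<i> * of_nat n / of_nat k) = of_int (2 * m) * pi"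
        unfolding pw exp_eq_1 by blast
      then have "2 * pi * n / k = 2 * m * pi" by simp
      then have "real n = real k * m" using k by (simp add: field_simps)
      then have "int n = int k * m" by (metis of_int_eq_iff of_int_mult of_int_of_nat_eq)
      then have "int k dvd int n" by simp
      then show False using False by simp
    qed
    have "(\<omega> ^ n) ^ k = \<omega> ^ (n * k)" by (simp add: power_mult)
    also have "\<dots> = exp (of_nat n * (2 * of_real pi * \<i>))"
      using k unfolding pw by (simp add: field_simps)
    also have "\<dots> = 1" by (simp add: exp_of_nat_mult)
    finally have "(\<omega> ^ n) ^ k = 1" .
    then show ?thesis using ne False by (simp add: sum_gp_strict)
  qed
qed

lemma coef_bound:
  fixes h :: "complex \<Rightarrow> complex"
  assumes hol: "h holomorphic_on ball 0 1"
    and bd: "\<And>z. z \<in> ball 0 1 \<Longrightarrow> cmod (h z) \<le> 1"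
    and k: "k \<ge> 1"
  shows "cmod ((deriv^^k) h 0 / fact k) \<le> 1 - (cmod (h 0))\<^sup>2"
proof (cases "cmod (h 0) = 1")
  case True
  have "h constant_on ball 0 1"
    by (rule maximum_modulus_principle[OF hol open_ball connected_ball open_ball subset_refl, of 0])
       (use bd True in auto)
  then obtain c where c: "\<And>x. x \<in> ball 0 1 \<Longrightarrow> h x = c" unfolding constant_on_def by blast
  have ev: "eventually (\<lambda>x. h x = c) (nhds (0::complex))"
  proof -
    have "eventually (\<lambda>x. x \<in> ball 0 1) (nhds (0::complex))"
      by (intro eventually_nhds_in_open) auto
    then show ?thesis by (rule eventually_mono) (rule c)
  qed
  have "(deriv^^k) h 0 = (deriv^^k) (\<lambda>_. c) 0"
    by (rule higher_deriv_cong_ev[OF ev refl])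
  then show ?thesis using k True by simp
next
  case False
  define a where "a = h 0"
  have a1: "cmod a < 1" using False bd[of 0] by (simp add: a_def)
  define b where "b n = (deriv^^n) h 0 / fact n" for n
  have ser: "(\<lambda>n. b n * z^n) sums h z" if "z \<in> ball 0 1" for z
    using holomorphic_power_series[OF hol that] by (simp add: b_def)
  define \<omega> where "\<omega> = exp (2 * of_real pi * \<i> / of_nat k)"
  have n\<omega>: "cmod \<omega> = 1" unfolding \<omega>_def by (simp add: norm_exp_eq_Re)
  define c where "c n = (1 / of_nat k) * (\<Sum>j<k. (\<omega> ^ n) ^ j)" for n
  have c_eq: "c n = (if k dvd n then 1 else 0)" for n
    using roots_unity_sum[OF k, of n] k unfolding c_def \<omega>_def by simp
  define H where "H z = (1 / of_nat k) * (\<Sum>j<k. h (\<omega> ^ j * z))" for z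
  have inball: "\<omega> ^ j * z \<in> ball 0 1" if "z \<in> ball 0 1" for z j
    using that by (simp add: norm_mult norm_power n\<omega>)
  have Hser: "(\<lambda>n. b n * c n * z^n) sums H z" if z: "z \<in> ball 0 1" for z
  proof -
    have "(\<lambda>n. \<Sum>j<k. b n * (\<omega> ^ j * z) ^ n) sums (\<Sum>j<k. h (\<omega> ^ j * z))"
      by (rule sums_sum) (use ser inball z in auto)
    then have "(\<lambda>n. (1 / of_nat k) * (\<Sum>j<k. b n * (\<omega> ^ j * z) ^ n)) sums H z"
      unfolding H_def by (rule sums_mult)
    moreover have "(1 / of_nat k) * (\<Sum>j<k. b n * (\<omega> ^ j * z) ^ n) = b n * c n * z^n" for n
      unfolding c_def by (simp add: sum_distrib_left sum_distrib_right power_mult_distrib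
          power_mult[symmetric] mult.commute mult.left_commute)
    ultimately show ?thesis by simp
  qed
  have Hbd: "cmod (H z) \<le> 1" if z: "z \<in> ball 0 1" for z
  proof -
    have "cmod (\<Sum>j<k. h (\<omega> ^ j * z)) \<le> (\<Sum>j<k. 1)"
      by (rule order.trans[OF norm_sum sum_mono]) (use bd inball z in auto)
    then show ?thesis using k unfolding H_def by (simp add: norm_mult norm_divide)
  qed
  have H0: "H 0 = a" using k unfolding H_def a_def by simp
  define d where "d n = b n * c n" for n
  have d0: "d 0 = a" unfolding d_def c_eq b_def a_def by simp
  have dsmall: "d i = 0" if "0 < i" "i < k" for i
    using that unfolding d_def c_eq by (auto dest: dvd_imp_le)
  have dk: "d k = b k" unfolding d_def c_eq by simp
  define R where "R z = (if z = 0 then d k else (H z - a) / z^k)" for z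
  have Rser: "(\<lambda>i. d (i + k) * z^i) sums R z" if z: "z \<in> ball 0 1" for z
  proof (cases "z = 0")
    case True
    then show ?thesis unfolding R_def using powser_sums_zero[of "\<lambda>i. d (i + k)"] by simp
  next
    case False
    have "(\<Sum>i<k. d i * z ^ i) = a"
    proof -
      have "(\<Sum>i<k. d i * z ^ i) = (\<Sum>i\<in>{0}. d i * z ^ i)"
        by (rule sum.mono_neutral_right) (use k dsmall in auto)
      then show ?thesis using d0 by simp
    qed
    moreover have "(\<lambda>n. d n * z^n) sums H z" using Hser[OF z] by (simp add: d_def)
    ultimately have "(\<lambda>i. d (i + k) * z^(i + k)) sums (H z - a)"
      using sums_iff_shift[of "\<lambda>n. d n * z^n" k "H z - a"] by simp
    then have "(\<lambda>i. d (i + k) * z^(i + k) * (1 / z^k)) sums ((H z - a) * (1 / z^k))"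
      by (rule sums_mult2)
    then show ?thesis using False unfolding R_def by (simp add: power_add)
  qed
  have holR: "R holomorphic_on ball 0 1" by (rule sums_holo[OF _ Rser]) auto
  have holH: "H holomorphic_on ball 0 1" by (rule sums_holo[OF _ Hser]) auto
  have den: "1 - cnj a * H z \<noteq> 0" if "z \<in> ball 0 1" for z
  proof
    assume "1 - cnj a * H z = 0"
    then have "cnj a * H z = 1" by simp
    then have "cmod a * cmod (H z) = 1" by (metis complex_mod_cnj norm_mult norm_one)
    moreover have "cmod a * cmod (H z) < 1"
      using a1 Hbd[OF that] by (metis mult_le_one mult_less_cancel_right1 norm_ge_zero not_le
          order_le_less_trans zero_less_one mult.commute)
    ultimately show False by simp
  qed
  define q where "q z = R z / (1 - cnj a * H z)" for z
  have holq: "q holomorphic_on ball 0 1"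
    unfolding q_def using den by (intro holomorphic_intros holR holH) auto
  have q0: "q 0 = b k / complex_of_real (1 - (cmod a)\<^sup>2)"
  proof -
    have "cnj a * a = of_real ((cmod a)\<^sup>2)" using complex_norm_square[of a] by (simp add: mult.commute)
    then show ?thesis unfolding q_def R_def H0 dk by (simp add: of_real_diff)
  qed
  have main: "r ^ k * (cmod (b k) / (1 - (cmod a)\<^sup>2)) \<le> 1" if r: "0 < r" "r < 1" for r
  proof -
    have "norm ((deriv ^^ 0) q 0) \<le> (fact 0) * (1 / r^k) / r^0"
    proof (rule Cauchy_inequality)
      show "q holomorphic_on ball 0 r"
        by (rule holomorphic_on_subset[OF holq]) (use r in auto)
      show "continuous_on (cball 0 r) q"
        by (rule holomorphic_on_imp_continuous_on, rule holomorphic_on_subset[OF holq]) (use r in auto)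
      show "0 < r" by fact
      fix x :: complex assume x: "norm (0 - x) = r"
      then have xb: "x \<in> ball 0 1" "x \<noteq> 0" using r by auto
      have nx: "cmod x = r" using x by simp
      have "cmod (q x) = cmod (H x - a) / (r ^ k * cmod (1 - cnj a * H x))"
        unfolding q_def R_def using xb by (simp add: norm_divide norm_mult norm_power nx)
      also have "\<dots> \<le> cmod (1 - cnj a * H x) / (r ^ k * cmod (1 - cnj a * H x))"
        using mobius_le[OF a1 Hbd[OF xb(1)]] r by (intro divide_right_mono) auto
      also have "\<dots> = 1 / r ^ k" using den[OF xb(1)] by simp
      finally show "cmod (q x) \<le> 1 / r ^ k" .
    qed
    then have "cmod (q 0) \<le> 1 / r ^ k" by simp
    moreover have pos: "1 - (cmod a)\<^sup>2 > 0" using a1 by (simp add: abs_square_less_1)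
    moreover have "cmod (q 0) = cmod (b k) / (1 - (cmod a)\<^sup>2)"
      unfolding q0 norm_divide norm_of_real using pos by simp
    ultimately show ?thesis using r
      by (simp add: field_simps)
  qed
  have "cmod (b k) / (1 - (cmod a)\<^sup>2) \<le> 1"
  proof (rule field_le_mult_one_interval)
    fix z :: real assume z: "0 < z" "z < 1"
    have "root k z ^ k = z" using k z by simp
    moreover have "0 < root k z" "root k z < 1" using k z by (auto intro: real_root_gt_zero)
    ultimately show "z * (cmod (b k) / (1 - (cmod a)\<^sup>2)) \<le> 1"
      using main[of "root k z"] by simp
  qed
  moreover have "1 - (cmod a)\<^sup>2 > 0" using a1 by (simp add: abs_square_less_1)
  ultimately show ?thesis unfolding b_def a_def by (simp add: field_simps)
qed

lemma mobius_lt: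
  fixes a u :: complex
  assumes "cmod a < 1" "cmod u < 1"
  shows "cmod (u - a) < cmod (1 - cnj a * u)"
proof -
  have "complex_of_real ((cmod (1 - cnj a * u))\<^sup>2 - (cmod (u - a))\<^sup>2)
        = (1 - cnj a * u) * cnj (1 - cnj a * u) - (u - a) * cnj (u - a)"
    by (simp only: of_real_diff complex_norm_square)
  also have "\<dots> = 1 + (a * cnj a) * (u * cnj u) - u * cnj u - a * cnj a"
    by (simp add: algebra_simps)
  also have "\<dots> = complex_of_real ((1 - (cmod a)\<^sup>2) * (1 - (cmod u)\<^sup>2))"
    by (simp add: complex_norm_square[symmetric] algebra_simps)
  finally have "(cmod (1 - cnj a * u))\<^sup>2 - (cmod (u - a))\<^sup>2 = (1 - (cmod a)\<^sup>2) * (1 - (cmod u)\<^sup>2)"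
    using of_real_eq_iff by blast
  moreover have "(1 - (cmod a)\<^sup>2) * (1 - (cmod u)\<^sup>2) > 0"
    using assms by (intro mult_pos_pos) (auto simp: abs_square_less_1)
  ultimately have "(cmod (u - a))\<^sup>2 < (cmod (1 - cnj a * u))\<^sup>2" by linarith
  then show ?thesis
    by (rule power2_less_imp_less) simp
qed

lemma pow_nonneg_coeffs:
  fixes F :: "complex fps"
  assumes "\<And>m. Im (F $ m) = 0 \<and> Re (F $ m) \<ge> 0"
  shows "Im ((F ^ i) $ n) = 0 \<and> Re ((F ^ i) $ n) \<ge> 0"
proof (induction i arbitrary: n)
  case 0
  then show ?case by simp
next
  case (Suc i)
  have eq: "(F ^ Suc i) $ n = (\<Sum>j=0..n. F $ j * (F ^ i) $ (n - j))"
    by (simp add: fps_mult_nth)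
  have "Im (F $ j * (F ^ i) $ (n - j)) = 0 \<and> Re (F $ j * (F ^ i) $ (n - j)) \<ge> 0" for j
    using assms[of j] Suc.IH[of "n - j"] by simp
  then show ?case unfolding eq by (simp add: Im_sum Re_sum sum_nonneg)
qed

theorem lemma2:
  fixes \<gamma> :: real and f :: "complex \<Rightarrow> complex" and a :: "nat \<Rightarrow> complex"
  assumes "0 \<le> \<gamma>" and "\<gamma> < 1"
    and "f holomorphic_on Omega \<gamma>"
    and "\<And>z. z \<in> Omega \<gamma> \<Longrightarrow> cmod (f z) \<le> 1"
    and "\<And>z. z \<in> ball 0 1 \<Longrightarrow> (\<lambda>n. a n * z ^ n) sums f z"
    and "n \<ge> 1"
  shows "cmod (a n) \<le> (1 - (cmod (a 0))\<^sup>2) / (1 + \<gamma>)"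
proof -
  note g0 = assms(1) and g1 = assms(2) and holf = assms(3) and fbd = assms(4)
    and fser = assms(5) and n1 = assms(6)
  define cg where "cg = complex_of_real \<gamma>"
  define \<phi> where "\<phi> w = (1 + cg) * w / (1 + cg * w)" for w
  define \<psi> where "\<psi> z = z / ((1 + cg) - cg * z)" for z
  have den\<phi>: "1 + cg * w \<noteq> 0" if "w \<in> ball 0 1" for w
  proof
    assume "1 + cg * w = 0"
    then have "cmod (cg * w) = 1" by (metis add.commute add_eq_0_iff norm_minus_cancel norm_one)
    moreover have "cmod (cg * w) < 1" using that g0 g1 unfolding cg_def
      by (simp add: norm_mult) (metis abs_of_nonneg less_one mult_strict_mono' norm_ge_zero mult_1_right
          order_less_imp_le less_le_trans mult_less_cancel_right1 not_le)
    ultimately show False by simp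
  qed
  have den\<psi>: "(1 + cg) - cg * z \<noteq> 0" if "z \<in> ball 0 1" for z
  proof
    assume "(1 + cg) - cg * z = 0"
    then have "cmod (1 + cg) = cmod (cg * z)" by simp
    moreover have "cmod (1 + cg) = 1 + \<gamma>" unfolding cg_def using g0
      by (metis abs_of_nonneg add_nonneg_nonneg norm_of_real of_real_1 of_real_add zero_le_one)
    moreover have "cmod (cg * z) \<le> \<gamma>" using that g0 unfolding cg_def
      by (simp add: norm_mult mult_left_le)
    ultimately show False by simp
  qed
  have \<phi>\<Omega>: "\<phi> w \<in> Omega \<gamma>" if w: "w \<in> ball 0 1" for w
  proof -
    have lt: "cmod (w + cg) < cmod (1 + cg * w)"
      using mobius_lt[of "- cg" w] w g0 g1 unfolding cg_def by simp
    have eq: "\<phi> w + complex_of_real (\<gamma> / (1 - \<gamma>)) = (w + cg) / (complex_of_real (1 - \<gamma>) * (1 + cg * w))"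
      using den\<phi>[OF w] g1 unfolding \<phi>_def cg_def
      by (simp add: field_simps of_real_diff)
    have "cmod (\<phi> w + complex_of_real (\<gamma> / (1 - \<gamma>))) = cmod (w + cg) / ((1 - \<gamma>) * cmod (1 + cg * w))"
      unfolding eq norm_divide norm_mult norm_of_real using g1 by simp
    also have "\<dots> < 1 / (1 - \<gamma>)"
    proof -
      have pN: "cmod (1 + cg * w) > 0" using den\<phi>[OF w] by simp
      have "cmod (w + cg) / ((1 - \<gamma>) * cmod (1 + cg * w)) < cmod (1 + cg * w) / ((1 - \<gamma>) * cmod (1 + cg * w))"
        using lt g1 pN by (intro divide_strict_right_mono) auto
      also have "\<dots> = 1 / (1 - \<gamma>)" using pN g1 by simp
      finally show ?thesis .
    qed
    finally show ?thesis unfolding Omega_def by simp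
  qed
  have c1: "1 + cg \<noteq> 0" unfolding cg_def using g0
    by (metis add_nonneg_nonneg of_real_1 of_real_add of_real_eq_0_iff zero_less_one not_le
        add_pos_nonneg less_numeral_extra(3))
  have \<phi>\<psi>: "\<phi> (\<psi> z) = z" if z: "z \<in> ball 0 1" for z
  proof -
    have D: "(1 + cg) - cg * z \<noteq> 0" by (rule den\<psi>[OF z])
    have e1: "1 + cg * \<psi> z = (1 + cg) / ((1 + cg) - cg * z)"
      unfolding \<psi>_def using D by (simp add: field_simps)
    have "\<phi> (\<psi> z) = (1 + cg) * (z / ((1 + cg) - cg * z)) / ((1 + cg) / ((1 + cg) - cg * z))"
      unfolding \<phi>_def e1 by (simp add: \<psi>_def)
    also have "\<dots> = z" using D c1 by (simp add: divide_simps mult.commute)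
    finally show ?thesis .
  qed
  define h where "h = f \<circ> \<phi>"
  have hol\<phi>: "\<phi> holomorphic_on ball 0 1"
    unfolding \<phi>_def using den\<phi> by (intro holomorphic_intros) auto
  have holh: "h holomorphic_on ball 0 1"
    unfolding h_def
    by (rule holomorphic_on_compose_gen[OF hol\<phi> holf]) (use \<phi>\<Omega> in auto)
  have hbd: "cmod (h z) \<le> 1" if "z \<in> ball 0 1" for z
    unfolding h_def using fbd \<phi>\<Omega>[OF that] by simp
  define b where "b m = (deriv^^m) h 0 / fact m" for m
  have bbd: "cmod (b i) \<le> 1 - (cmod (h 0))\<^sup>2" if "i \<ge> 1" for i
    unfolding b_def by (rule coef_bound[OF holh hbd that])
  have a0: "a 0 = f 0" using fser[of 0] by simp
  have h0: "h 0 = a 0" unfolding h_def a0 \<phi>_def by simp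
  have hB: "h has_fps_expansion Abs_fps b"
    by (rule sums_has_fps(2)[of 1]) (use holomorphic_power_series[OF holh] in \<open>auto simp: b_def\<close>)
  have fA: "f has_fps_expansion Abs_fps a"
    by (rule sums_has_fps(2)[of 1]) (use fser in auto)
  define gc where "gc m = (if m = 0 then 0 else cg ^ (m - 1) / (1 + cg) ^ m)" for m
  have \<psi>ser: "(\<lambda>m. gc m * z ^ m) sums \<psi> z" if z: "z \<in> ball 0 1" for z
  proof -
    define t where "t = cg * z / (1 + cg)"
    have "cmod t < 1"
    proof -
      have "cmod (1 + cg) = 1 + \<gamma>" unfolding cg_def using g0
        by (metis abs_of_nonneg add_nonneg_nonneg norm_of_real of_real_1 of_real_add zero_le_one)
      moreover have "cmod (cg * z) \<le> \<gamma>" using z g0 unfolding cg_def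
        by (simp add: norm_mult mult_left_le)
      ultimately show ?thesis unfolding t_def using g0 by (simp add: norm_divide)
    qed
    then have "(\<lambda>m. t ^ m) sums (1 / (1 - t))" by (rule geometric_sums)
    then have "(\<lambda>m. z / (1 + cg) * t ^ m) sums (z / (1 + cg) * (1 / (1 - t)))"
      by (rule sums_mult)
    moreover have "z / (1 + cg) * t ^ m = gc (Suc m) * z ^ Suc m" for m
      unfolding gc_def t_def by (simp add: power_divide power_mult_distrib field_simps)
    moreover have "z / (1 + cg) * (1 / (1 - t)) = \<psi> z"
    proof -
      have "1 + cg \<noteq> 0" unfolding cg_def using g0
        by (metis add_nonneg_nonneg of_real_1 of_real_add of_real_eq_0_iff zero_less_one not_le
            add_pos_nonneg less_numeral_extra(3))
      then have "1 - t = ((1 + cg) - cg * z) / (1 + cg)" unfolding t_def by (simp add: field_simps)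
      then show ?thesis unfolding \<psi>_def using den\<psi>[OF z] \<open>1 + cg \<noteq> 0\<close> by simp
    qed
    ultimately have "(\<lambda>m. gc (Suc m) * z ^ Suc m) sums \<psi> z" by simp
    from sums_Suc[OF this] show ?thesis by (simp add: gc_def)
  qed
  have \<psi>G: "\<psi> has_fps_expansion Abs_fps gc"
    by (rule sums_has_fps(2)[of 1]) (use \<psi>ser in auto)
  have G0: "Abs_fps gc $ 0 = 0" by (simp add: gc_def)
  have ev1: "eventually (\<lambda>z. z \<in> ball 0 1) (nhds (0::complex))"
    by (intro eventually_nhds_in_open) auto
  have comp1: "(h \<circ> \<psi>) has_fps_expansion fps_compose (Abs_fps b) (Abs_fps gc)"
    by (rule has_fps_expansion_compose[OF hB \<psi>G G0])
  have ev_f: "eventually (\<lambda>z. f z = (h \<circ> \<psi>) z) (nhds 0)"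
    using ev1 by eventually_elim (simp add: h_def \<phi>\<psi>)
  define x where "x i = (Abs_fps gc ^ i) $ n" for i
  have an: "a n = (\<Sum>i=0..n. b i * x i)"
  proof -
    have "a n = (deriv ^^ n) f 0 / fact n" using fps_nth_fps_expansion[OF fA, of n] by simp
    also have "\<dots> = (deriv ^^ n) (h \<circ> \<psi>) 0 / fact n"
      by (rule arg_cong[where f="\<lambda>x. x / fact n"], rule higher_deriv_cong_ev[OF ev_f refl])
    also have "\<dots> = fps_compose (Abs_fps b) (Abs_fps gc) $ n"
      using fps_nth_fps_expansion[OF comp1, of n] by simp
    finally show ?thesis by (simp add: fps_compose_nth x_def)
  qed
  define kc where "kc (i::nat) = (if i = 0 then 0 else (1::complex))" for i
  define kf where "kf u = u / (1 - u)" for u :: complex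
  have kser: "(\<lambda>i. kc i * u ^ i) sums kf u" if u: "u \<in> ball 0 1" for u
  proof -
    have "(\<lambda>i. u * u ^ i) sums (u * (1 / (1 - u)))"
      by (rule sums_mult, rule geometric_sums) (use u in simp)
    then have "(\<lambda>i. kc (Suc i) * u ^ Suc i) sums kf u" by (simp add: kc_def kf_def)
    from sums_Suc[OF this] show ?thesis by (simp add: kc_def)
  qed
  have kK: "kf has_fps_expansion Abs_fps kc"
    by (rule sums_has_fps(2)[of 1]) (use kser in auto)
  have comp2: "(kf \<circ> \<psi>) has_fps_expansion fps_compose (Abs_fps kc) (Abs_fps gc)"
    by (rule has_fps_expansion_compose[OF kK \<psi>G G0])
  define ec where "ec (m::nat) = (if m = 0 then 0 else 1 / (1 + cg))" for m
  define ef where "ef z = z / ((1 + cg) * (1 - z))" for z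
  have eser: "(\<lambda>m. ec m * z ^ m) sums ef z" if z: "z \<in> ball 0 1" for z
  proof -
    have "(\<lambda>i. z / (1 + cg) * z ^ i) sums (z / (1 + cg) * (1 / (1 - z)))"
      by (rule sums_mult, rule geometric_sums) (use z in simp)
    then have "(\<lambda>i. ec (Suc i) * z ^ Suc i) sums ef z" by (simp add: ec_def ef_def)
    from sums_Suc[OF this] show ?thesis by (simp add: ec_def)
  qed
  have eE: "ef has_fps_expansion Abs_fps ec"
    by (rule sums_has_fps(2)[of 1]) (use eser in auto)
  have ev_e: "eventually (\<lambda>z. ef z = (kf \<circ> \<psi>) z) (nhds 0)"
    using ev1
  proof eventually_elim
    case (elim z)
    have d: "(1 + cg) - cg * z \<noteq> 0" by (rule den\<psi>[OF elim])
    have z1: "1 - z \<noteq> 0" using elim by auto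
    have c1: "1 + cg \<noteq> 0" unfolding cg_def using g0
      by (metis add_nonneg_nonneg of_real_1 of_real_add of_real_eq_0_iff zero_less_one not_le
          add_pos_nonneg less_numeral_extra(3))
    have "1 - \<psi> z = (1 + cg) * (1 - z) / ((1 + cg) - cg * z)"
      unfolding \<psi>_def using d by (simp add: field_simps)
    then have "(kf \<circ> \<psi>) z = (z / ((1 + cg) - cg * z)) / ((1 + cg) * (1 - z) / ((1 + cg) - cg * z))"
      unfolding kf_def o_def by (simp add: \<psi>_def)
    also have "\<dots> = ef z" unfolding ef_def using d z1 c1 by (simp add: divide_simps)
    finally show ?case by simp
  qed
  have sumx: "(\<Sum>i=0..n. kc i * x i) = 1 / (1 + cg)"
  proof -
    have "1 / (1 + cg) = ec n" using n1 by (simp add: ec_def)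
    also have "\<dots> = (deriv ^^ n) ef 0 / fact n" using fps_nth_fps_expansion[OF eE, of n] by simp
    also have "\<dots> = (deriv ^^ n) (kf \<circ> \<psi>) 0 / fact n"
      by (rule arg_cong[where f="\<lambda>x. x / fact n"], rule higher_deriv_cong_ev[OF ev_e refl])
    also have "\<dots> = fps_compose (Abs_fps kc) (Abs_fps gc) $ n"
      using fps_nth_fps_expansion[OF comp2, of n] by simp
    finally show ?thesis by (simp add: fps_compose_nth x_def)
  qed
  have xnn: "Im (x i) = 0 \<and> Re (x i) \<ge> 0" for i
    unfolding x_def
  proof (rule pow_nonneg_coeffs)
    fix m
    have "Im (cg ^ (m - 1) / (1 + cg) ^ m) = 0 \<and> Re (cg ^ (m - 1) / (1 + cg) ^ m) \<ge> 0"
    proof -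
      have "cg ^ (m - 1) / (1 + cg) ^ m = complex_of_real (\<gamma> ^ (m - 1) / (1 + \<gamma>) ^ m)"
        unfolding cg_def by simp
      then show ?thesis using g0 by simp
    qed
    then show "Im (Abs_fps gc $ m) = 0 \<and> Re (Abs_fps gc $ m) \<ge> 0" by (simp add: gc_def)
  qed
  have x0: "x 0 = 0" using n1 by (simp add: x_def)
  have nx: "cmod (x i) = Re (x i)" for i
    using xnn[of i] by (simp add: cmod_def)
  define M where "M = 1 - (cmod (a 0))\<^sup>2"
  have "cmod (a n) \<le> (\<Sum>i=0..n. cmod (b i) * Re (x i))"
    unfolding an by (rule order.trans[OF norm_sum]) (simp add: norm_mult nx)
  also have "\<dots> \<le> (\<Sum>i=0..n. M * Re (kc i * x i))"
  proof (rule sum_mono)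
    fix i assume "i \<in> {0..n}"
    show "cmod (b i) * Re (x i) \<le> M * Re (kc i * x i)"
    proof (cases "i = 0")
      case True then show ?thesis by (simp add: x0)
    next
      case False
      then have "cmod (b i) \<le> M" using bbd[of i] h0 by (simp add: M_def)
      then show ?thesis using False xnn[of i] by (simp add: kc_def mult_right_mono)
    qed
  qed
  also have "\<dots> = M * Re (\<Sum>i=0..n. kc i * x i)" by (simp add: sum_distrib_left Re_sum)
  also have "\<dots> = M / (1 + \<gamma>)"
  proof -
    have "1 / (1 + cg) = complex_of_real (1 / (1 + \<gamma>))" unfolding cg_def by simp
    then show ?thesis unfolding sumx by (simp only: Re_complex_of_real) simp
  qed
  finally show ?thesis by (simp add: M_def)
qed

end
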